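(* Let $P$ be a polyomino whose matrix contains neither $S_1=\begin{bmatrix}1&0\\0&1\end{bmatrix}$ nor $S_2=\begin{bmatrix}0&1\\1&0\end{bmatrix}$ as a submatrix (an $L$-polyomino). Then $P$ is uniquely determined by its horizontal and vertical projections, i.e. no other binary matrix has the same vector of row sums and the same vector of column sums as the matrix of $P$.
   Context: A polyomino is a finite union of unit cells of $\mathbb{Z}\times\mathbb{Z}$ that is connected via edge adjacency, up to translation, identified with the binary matrix of its minimal bounding rectangle (entry $1$ iff the corresponding unit square is a cell). A matrix is a submatrix of another if obtained by deleting rows and/or columns. The horizontal (resp. vertical) projections of a binary matrix are the vector of its row sums (resp. column sums). *)

theory Defs
  imports Main
begin

text \<open>A binary matrix with m rows and n columns is represented by a function
  A :: nat => nat => bool together with its dimensions; only entries A i j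
  with i < m and j < n are relevant (True = entry 1 = cell).\<close>

definition cells :: "(nat \<Rightarrow> nat \<Rightarrow> bool) \<Rightarrow> nat \<Rightarrow> nat \<Rightarrow> (nat \<times> nat) set" where
  "cells A m n = {(i, j). i < m \<and> j < n \<and> A i j}"

definition edge_adj :: "nat \<times> nat \<Rightarrow> nat \<times> nat \<Rightarrow> bool" where
  "edge_adj p q \<longleftrightarrow>
     (fst p = fst q \<and> (snd p = Suc (snd q) \<or> snd q = Suc (snd p))) \<or>
     (snd p = snd q \<and> (fst p = Suc (fst q) \<or> fst q = Suc (fst p)))"

definition cells_connected :: "(nat \<times> nat) set \<Rightarrow> bool" where
  "cells_connected C \<longleftrightarrow>
     (\<forall>p\<in>C. \<forall>q\<in>C. (p, q) \<in> {(x, y). x \<in> C \<and> y \<in> C \<and> edge_adj x y}\<^sup>*)"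

text \<open>A is the matrix of a polyomino: nonempty, edge-connected set of cells,
  and the m x n rectangle is its minimal bounding rectangle (every row and
  every column contains a cell).\<close>

definition polyomino_matrix :: "(nat \<Rightarrow> nat \<Rightarrow> bool) \<Rightarrow> nat \<Rightarrow> nat \<Rightarrow> bool" where
  "polyomino_matrix A m n \<longleftrightarrow>
     0 < m \<and> 0 < n \<and>
     (\<forall>i<m. \<exists>j<n. A i j) \<and> (\<forall>j<n. \<exists>i<m. A i j) \<and>
     cells_connected (cells A m n)"

definition has_submatrix ::
  "(nat \<Rightarrow> nat \<Rightarrow> bool) \<Rightarrow> nat \<Rightarrow> nat \<Rightarrow> (nat \<Rightarrow> nat \<Rightarrow> bool) \<Rightarrow> nat \<Rightarrow> nat \<Rightarrow> bool" where
  "has_submatrix A m n S p q \<longleftrightarrow>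
     (\<exists>f g. strict_mono_on {..<p} f \<and> f ` {..<p} \<subseteq> {..<m} \<and>
            strict_mono_on {..<q} g \<and> g ` {..<q} \<subseteq> {..<n} \<and>
            (\<forall>a<p. \<forall>b<q. A (f a) (g b) = S a b))"

definition S1 :: "nat \<Rightarrow> nat \<Rightarrow> bool" where
  "S1 a b \<longleftrightarrow> a = b"

definition S2 :: "nat \<Rightarrow> nat \<Rightarrow> bool" where
  "S2 a b \<longleftrightarrow> a \<noteq> b"

definition row_sum :: "(nat \<Rightarrow> nat \<Rightarrow> bool) \<Rightarrow> nat \<Rightarrow> nat \<Rightarrow> nat" where
  "row_sum A n i = card {j. j < n \<and> A i j}"

definition col_sum :: "(nat \<Rightarrow> nat \<Rightarrow> bool) \<Rightarrow> nat \<Rightarrow> nat \<Rightarrow> nat" where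
  "col_sum A m j = card {i. i < m \<and> A i j}"

definition L_polyomino :: "(nat \<Rightarrow> nat \<Rightarrow> bool) \<Rightarrow> nat \<Rightarrow> nat \<Rightarrow> bool" where
  "L_polyomino A m n \<longleftrightarrow> polyomino_matrix A m n \<and>
     \<not> has_submatrix A m n S1 2 2 \<and> \<not> has_submatrix A m n S2 2 2"

end

theory Submission
  imports Defs
begin

lemma sub22:
  assumes "i1 < i2" "i2 < m" "j1 < j2" "j2 < n"
    and "A i1 j1 = S 0 0" "A i1 j2 = S 0 1" "A i2 j1 = S 1 0" "A i2 j2 = S 1 1"
  shows "has_submatrix A m n S 2 2"
  unfolding has_submatrix_def
proof (intro exI conjI)
  let ?f = "\<lambda>a::nat. if a = 0 then i1 else i2"
  let ?g = "\<lambda>a::nat. if a = 0 then j1 else j2"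
  show "strict_mono_on {..<2} ?f" using assms
    by (auto simp: strict_mono_on_def)
  show "strict_mono_on {..<2} ?g" using assms
    by (auto simp: strict_mono_on_def)
  show "?f ` {..<2} \<subseteq> {..<m}" using assms by auto
  show "?g ` {..<2} \<subseteq> {..<n}" using assms by auto
  show "\<forall>a<2. \<forall>b<2. A (?f a) (?g b) = S a b"
  proof (intro allI impI)
    fix a b :: nat assume "a < 2" "b < 2"
    then have "a = 0 \<or> a = 1" "b = 0 \<or> b = 1" by auto
    then show "A (?f a) (?g b) = S a b" using assms by auto
  qed
qed

lemma nested:
  assumes noS1: "\<not> has_submatrix A m n S1 2 2" and noS2: "\<not> has_submatrix A m n S2 2 2"
    and "i < m" "i' < m"
  shows "{j. j < n \<and> A i j} \<subseteq> {j. j < n \<and> A i' j} \<or> {j. j < n \<and> A i' j} \<subseteq> {j. j < n \<and> A i j}"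
proof (rule ccontr)
  assume "\<not> ?thesis"
  then obtain j1 j2 where h: "j1 < n" "A i j1" "\<not> A i' j1" "j2 < n" "A i' j2" "\<not> A i j2" by auto
  then have "i \<noteq> i'" "j1 \<noteq> j2" by auto
  then consider "i < i'" "j1 < j2" | "i < i'" "j2 < j1" | "i' < i" "j1 < j2" | "i' < i" "j2 < j1"
    by linarith
  then show False
  proof cases
    case 1 then show ?thesis using sub22[of i i' m j1 j2 n A S1] h assms noS1 by (auto simp: S1_def)
  next
    case 2 then show ?thesis using sub22[of i i' m j2 j1 n A S2] h assms noS2 by (auto simp: S2_def)
  next
    case 3 then show ?thesis using sub22[of i' i m j1 j2 n A S2] h assms noS2 by (auto simp: S2_def)
  next
    case 4 then show ?thesis using sub22[of i' i m j2 j1 n A S1] h assms noS1 by (auto simp: S1_def)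
  qed
qed

definition cs :: "(nat \<Rightarrow> nat \<Rightarrow> bool) \<Rightarrow> nat set \<Rightarrow> nat \<Rightarrow> nat" where
  "cs A I j = card {i. i \<in> I \<and> A i j}"

lemma main:
  assumes noS1: "\<not> has_submatrix A m n S1 2 2" and noS2: "\<not> has_submatrix A m n S2 2 2"
  shows "finite I \<Longrightarrow> I \<subseteq> {..<m} \<Longrightarrow> (\<forall>i\<in>I. row_sum B n i = row_sum A n i) \<Longrightarrow>
    (\<forall>j<n. cs B I j = cs A I j) \<Longrightarrow> \<forall>i\<in>I. \<forall>j<n. B i j = A i j"
proof (induction I rule: finite_psubset_induct)
  case (psubset I)
  show ?case
  proof (cases "I = {}")
    case True then show ?thesis by simp
  next
    case False
    define R where "R i = {j. j < n \<and> A i j}" for i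
    have finR: "finite (R i)" for i unfolding R_def by auto
    obtain i0 where i0: "i0 \<in> I" "\<forall>i\<in>I. card (R i) \<le> card (R i0)"
    proof -
      have fin: "finite ((\<lambda>i. card (R i)) ` I)" using psubset.hyps(1) by auto
      have "Max ((\<lambda>i. card (R i)) ` I) \<in> (\<lambda>i. card (R i)) ` I"
        using Max_in[OF fin] False by auto
      then obtain i0 where "i0 \<in> I" "card (R i0) = Max ((\<lambda>i. card (R i)) ` I)" by auto
      moreover have "\<forall>i\<in>I. card (R i) \<le> Max ((\<lambda>i. card (R i)) ` I)" using fin by auto
      ultimately show ?thesis using that by auto
    qed
    have sub: "R i \<subseteq> R i0" if "i \<in> I" for i
    proof -
      have "R i \<subseteq> R i0 \<or> R i0 \<subseteq> R i"
        using nested[OF noS1 noS2, of i i0] that i0(1) psubset.prems(1) unfolding R_def by auto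
      then show ?thesis
      proof
        assume h: "R i0 \<subseteq> R i"
        have "card (R i) \<le> card (R i0)" using i0(2) that by auto
        then have "R i0 = R i" using card_subset_eq[OF finR h] card_mono[OF finR h] by linarith
        then show ?thesis by simp
      qed
    qed
    have row0: "B i0 j = A i0 j" if "j < n" for j
    proof -
      have Bsub: "{j. j < n \<and> B i0 j} \<subseteq> R i0"
      proof
        fix j assume j: "j \<in> {j. j < n \<and> B i0 j}"
        show "j \<in> R i0"
        proof (rule ccontr)
          assume "j \<notin> R i0"
          then have "{i. i \<in> I \<and> A i j} = {}" using sub j unfolding R_def by auto
          then have "cs B I j = 0" using psubset.prems(3) j unfolding cs_def by (metis (no_types, lifting) card.empty mem_Collect_eq)
          moreover have "finite {i. i \<in> I \<and> B i j}" using psubset.hyps(1) by auto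
          ultimately have "{i. i \<in> I \<and> B i j} = {}" by (simp add: cs_def)
          then show False using j i0(1) by auto
        qed
      qed
      have "card {j. j < n \<and> B i0 j} = card (R i0)"
        using psubset.prems(2) i0(1) by (auto simp: row_sum_def R_def)
      then have "{j. j < n \<and> B i0 j} = R i0" using Bsub finR card_subset_eq by blast
      then show ?thesis using that unfolding R_def by auto
    qed
    let ?J = "I - {i0}"
    have cs': "cs B ?J j = cs A ?J j" if "j < n" for j
    proof -
      have fin: "finite {i. i \<in> I \<and> X i j}" for X :: "nat \<Rightarrow> nat \<Rightarrow> bool"
        using psubset.hyps(1) by auto
      have eq: "{i. i \<in> ?J \<and> X i j} = {i. i \<in> I \<and> X i j} - {i0}" for X :: "nat \<Rightarrow> nat \<Rightarrow> bool"
        by auto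
      have "cs X ?J j = cs X I j - (if X i0 j then 1 else 0)" for X
        unfolding cs_def eq using fin[of X] i0(1) by (simp add: card_Diff_singleton_if)
      then show ?thesis using psubset.prems(3) that row0[OF that] by simp
    qed
    have IH: "\<forall>i\<in>?J. \<forall>j<n. B i j = A i j"
      using psubset.IH[of ?J] i0(1) psubset.prems cs' by auto
    then show ?thesis using row0 by auto
  qed
qed

theorem proposition16:
  fixes A B :: "nat \<Rightarrow> nat \<Rightarrow> bool" and m n :: nat
  assumes "L_polyomino A m n"
    and "\<forall>i<m. row_sum B n i = row_sum A n i"
    and "\<forall>j<n. col_sum B m j = col_sum A m j"
  shows "\<forall>i<m. \<forall>j<n. B i j = A i j"
proof -
  have n1: "\<not> has_submatrix A m n S1 2 2" "\<not> has_submatrix A m n S2 2 2"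
    using assms(1) by (auto simp: L_polyomino_def)
  have "\<forall>j<n. cs B {..<m} j = cs A {..<m} j"
    using assms(3) by (simp add: cs_def col_sum_def lessThan_def)
  then show ?thesis using main[OF n1(1) n1(2), of "{..<m}" B] assms(2) by auto
qed

end
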